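(* Let $k \ge 1$, $m = 4k+4$, $\theta = 2\pi/m$, and let $P$ be a finite point set in general position. For any two vertices $u, w \in P$, let $M$ be the midpoint of the side of $T_{uw}$ opposite $u$ and let $\alpha$ be the unsigned angle between $uw$ and $uM$. Then the $\theta_m$-graph on $P$ contains a path from $u$ to $w$ of length at most $$\left(\frac{\cos\alpha}{\cos(\theta/2)} + \frac{\cos\alpha\tan(\theta/2) + \sin\alpha}{\cos(\theta/2) - \sin(\theta/2)}\right)|uw|.$$
   Context: Cones: for $m \ge 2$, $\theta = 2\pi/m$; around each point $u$ draw $m$ rays with consecutive angular separation $\theta$, oriented so the vertical upward ray from $u$ bisects a cone $C_0^u$; cones numbered $C_0^u,\dots,C_{m-1}^u$ clockwise, same orientation at every point. General position: no two points on a line parallel to a cone boundary ray, no two on a line perpendicular to a cone bisector, no three collinear. The $\theta_m$-graph on $P$: for each $u\in P$ and each cone $C_i^u$ containing another point of $P$, add an edge from $u$ to the point of $C_i^u$ whose orthogonal projection onto the bisector of $C_i^u$ is closest to $u$; edges weighted by Euclidean length. Canonical triangle: if $w$ lies in cone $C$ of $u$, $T_{uw}$ is the triangle bounded by the two boundary rays of $C$ and the line through $w$ perpendicular to the bisector of $C$. *)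

theory Defs
  imports "HOL-Analysis.Analysis"
begin

definition cone_angle :: "nat \<Rightarrow> real" where
  "cone_angle m = 2 * pi / real m"

text \<open>Direction (angle, counterclockwise from the positive x-axis) of the bisector of cone i.
  Cone 0 is bisected by the vertical upward ray, cones numbered clockwise.\<close>
definition bisector_angle :: "nat \<Rightarrow> nat \<Rightarrow> real" where
  "bisector_angle m i = pi / 2 - real i * cone_angle m"

definition bisector_dir :: "nat \<Rightarrow> nat \<Rightarrow> complex" where
  "bisector_dir m i = cis (bisector_angle m i)"

definition bdry_dir1 :: "nat \<Rightarrow> nat \<Rightarrow> complex" where
  "bdry_dir1 m i = cis (bisector_angle m i - cone_angle m / 2)"

definition bdry_dir2 :: "nat \<Rightarrow> nat \<Rightarrow> complex" where
  "bdry_dir2 m i = cis (bisector_angle m i + cone_angle m / 2)"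

definition in_cone :: "nat \<Rightarrow> nat \<Rightarrow> complex \<Rightarrow> complex \<Rightarrow> bool" where
  "in_cone m i u v \<longleftrightarrow> v \<noteq> u \<and>
     (\<exists>a b. a \<ge> 0 \<and> b \<ge> 0 \<and> v - u = of_real a * bdry_dir1 m i + of_real b * bdry_dir2 m i)"

definition proj_len :: "nat \<Rightarrow> nat \<Rightarrow> complex \<Rightarrow> complex \<Rightarrow> real" where
  "proj_len m i u v = (v - u) \<bullet> bisector_dir m i"

definition parallel :: "complex \<Rightarrow> complex \<Rightarrow> bool" where
  "parallel x y \<longleftrightarrow> Im (cnj x * y) = 0"

definition collinear3 :: "complex \<Rightarrow> complex \<Rightarrow> complex \<Rightarrow> bool" where
  "collinear3 a b c \<longleftrightarrow> parallel (b - a) (c - a)"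

definition general_position :: "nat \<Rightarrow> complex set \<Rightarrow> bool" where
  "general_position m P \<longleftrightarrow>
     (\<forall>p\<in>P. \<forall>q\<in>P. p \<noteq> q \<longrightarrow>
        (\<forall>i<m. \<not> parallel (q - p) (bdry_dir1 m i) \<and> \<not> parallel (q - p) (bdry_dir2 m i)
                 \<and> (q - p) \<bullet> bisector_dir m i \<noteq> 0)) \<and>
     (\<forall>a\<in>P. \<forall>b\<in>P. \<forall>c\<in>P. a \<noteq> b \<and> a \<noteq> c \<and> b \<noteq> c \<longrightarrow> \<not> collinear3 a b c)"

definition theta_dedge :: "nat \<Rightarrow> complex set \<Rightarrow> complex \<Rightarrow> complex \<Rightarrow> bool" where
  "theta_dedge m P u v \<longleftrightarrow> u \<in> P \<and> v \<in> P \<and>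
     (\<exists>i<m. in_cone m i u v \<and>
        (\<forall>w\<in>P. in_cone m i u w \<longrightarrow> proj_len m i u v \<le> proj_len m i u w))"

definition theta_edge :: "nat \<Rightarrow> complex set \<Rightarrow> complex \<Rightarrow> complex \<Rightarrow> bool" where
  "theta_edge m P u v \<longleftrightarrow> theta_dedge m P u v \<or> theta_dedge m P v u"

definition is_theta_path :: "nat \<Rightarrow> complex set \<Rightarrow> complex list \<Rightarrow> complex \<Rightarrow> complex \<Rightarrow> bool" where
  "is_theta_path m P ps u w \<longleftrightarrow> ps \<noteq> [] \<and> hd ps = u \<and> last ps = w \<and>
     (\<forall>j. Suc j < length ps \<longrightarrow> theta_edge m P (ps ! j) (ps ! Suc j))"

definition path_length :: "complex list \<Rightarrow> real" where
  "path_length ps = sum_list (map (\<lambda>(a, b). dist a b) (zip ps (tl ps)))"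

text \<open>Canonical triangle T_uw for w in cone C_i^u: vertices u and the two intersections
  of the boundary rays with the line through w perpendicular to the bisector.\<close>
definition canon_far1 :: "nat \<Rightarrow> nat \<Rightarrow> complex \<Rightarrow> complex \<Rightarrow> complex" where
  "canon_far1 m i u w = u + of_real (proj_len m i u w / cos (cone_angle m / 2)) * bdry_dir1 m i"

definition canon_far2 :: "nat \<Rightarrow> nat \<Rightarrow> complex \<Rightarrow> complex \<Rightarrow> complex" where
  "canon_far2 m i u w = u + of_real (proj_len m i u w / cos (cone_angle m / 2)) * bdry_dir2 m i"

definition canonical_triangle :: "nat \<Rightarrow> nat \<Rightarrow> complex \<Rightarrow> complex \<Rightarrow> complex set" where
  "canonical_triangle m i u w = convex hull {u, canon_far1 m i u w, canon_far2 m i u w}"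

definition uangle :: "complex \<Rightarrow> complex \<Rightarrow> real" where
  "uangle x y = arccos ((x \<bullet> y) / (norm x * norm y))"

end

theory Submission
  imports Defs
begin

lemma sin_lower:
  fixes A x :: real
  assumes "0 \<le> A" "A \<le> pi/2" "A \<le> x" "x \<le> pi - A"
  shows "sin A \<le> sin x"
proof (cases "x \<le> pi/2")
  case True then show ?thesis using assms by (intro sin_monotone_2pi_le) auto
next
  case False
  have "sin A \<le> sin (pi - x)" using assms False by (intro sin_monotone_2pi_le) auto
  then show ?thesis by simp
qed

lemma abs_sin_add_int_pi: "\<bar>sin (y + of_int q * pi)\<bar> = \<bar>sin y\<bar>"
proof -
  have "sin (y + of_int q * pi) = sin y * cos (pi * of_int q) + cos y * sin (pi * of_int q)"
    by (simp add: sin_add mult.commute)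
  then show ?thesis by (auto simp: abs_mult)
qed

lemma sin_abs_shift:
  fixes K :: nat and N :: int and x :: real
  assumes K: "K \<ge> 1" and x: "\<bar>x\<bar> \<le> pi / (2 * K)"
  shows "\<bar>sin x\<bar> \<le> \<bar>sin (x + of_int N * (pi / K))\<bar>"
proof -
  define q where "q = N div int K"
  define r where "r = N mod int K"
  have Nqr: "N = q * int K + r" unfolding q_def r_def by simp
  have r0: "0 \<le> r" "r < int K" using K unfolding r_def by auto
  have Kp: "real K > 0" using K by simp
  have eq: "x + of_int N * (pi / K) = (x + of_int r * (pi / K)) + of_int q * pi"
    using Kp by (simp add: Nqr field_simps)
  have "\<bar>sin x\<bar> \<le> \<bar>sin (x + of_int r * (pi / K))\<bar>"
  proof (cases "r = 0")
    case True then show ?thesis by simp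
  next
    case False
    then have r1: "1 \<le> r" "r \<le> int K - 1" using r0 by auto
    have r1': "1 \<le> real_of_int r" "real_of_int r \<le> real K - 1" using r1 by linarith+
    have A0: "0 \<le> pi / (2*K)" using Kp by simp
    have A1: "pi / (2*K) \<le> pi / 2" using K by (intro divide_left_mono) auto
    have lo: "pi / (2*K) \<le> x + of_int r * (pi / K)"
    proof -
      have "1 * (pi / K) \<le> of_int r * (pi / K)" using r1' Kp by (intro mult_right_mono) auto
      moreover have "pi / K = pi/(2*K) + pi/(2*K)" using Kp by (simp add: field_simps)
      ultimately show ?thesis using x by linarith
    qed
    have hi: "x + of_int r * (pi / K) \<le> pi - pi / (2*K)"
    proof -
      have "of_int r * (pi / K) \<le> (real K - 1) * (pi / K)" using r1' Kp by (intro mult_right_mono) auto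
      moreover have "(real K - 1) * (pi / K) = pi - pi/(2*K) - pi/(2*K)" using Kp by (simp add: field_simps)
      ultimately show ?thesis using x by linarith
    qed
    have s1: "sin (pi/(2*K)) \<le> sin (x + of_int r * (pi / K))"
      using sin_lower[OF A0 A1 lo hi] .
    have xpi: "\<bar>x\<bar> \<le> pi" using x A1 by linarith
    have "\<bar>sin x\<bar> = sin \<bar>x\<bar>"
    proof (cases "x \<ge> 0")
      case True then show ?thesis using xpi sin_ge_zero[of x] by auto
    next
      case False then show ?thesis using xpi sin_ge_zero[of "-x"] by auto
    qed
    also have "\<dots> \<le> sin (pi/(2*K))"
      using x A1 by (intro sin_monotone_2pi_le) auto
    finally show ?thesis using s1 by linarith
  qed
  then show ?thesis unfolding eq abs_sin_add_int_pi .
qed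

lemma g_sq: "(x::real) = x \<Longrightarrow> (\<bar>cos x\<bar> + \<bar>sin x\<bar>)\<^sup>2 = 1 + \<bar>sin (2 * x)\<bar>"
proof -
  have "(\<bar>cos x\<bar> + \<bar>sin x\<bar>)\<^sup>2 = (cos x)\<^sup>2 + (sin x)\<^sup>2 + 2 * \<bar>sin x * cos x\<bar>"
    by (simp add: power2_eq_square abs_mult algebra_simps flip: abs_mult)
  also have "\<dots> = 1 + \<bar>sin (2 * x)\<bar>" by (simp add: sin_double abs_mult)
  finally show ?thesis .
qed

lemma main_trig:
  fixes K :: nat and N :: int and phi :: real
  assumes K: "K \<ge> 1" and phi: "\<bar>phi\<bar> \<le> pi / (4 * K)"
  shows "cos phi + \<bar>sin phi\<bar> \<le> \<bar>cos (phi + of_int N * (pi / (2*K)))\<bar> + \<bar>sin (phi + of_int N * (pi / (2*K)))\<bar>"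
proof -
  have Kp: "real K > 0" using K by simp
  have "pi / (4 * K) \<le> pi / 2" using K by (intro divide_left_mono) auto
  then have "cos phi \<ge> 0" using phi by (intro cos_ge_zero) auto
  then have L: "cos phi + \<bar>sin phi\<bar> = \<bar>cos phi\<bar> + \<bar>sin phi\<bar>" by simp
  have "\<bar>2*phi\<bar> \<le> pi / (2*K)" using phi Kp by (simp add: field_simps abs_mult)
  from sin_abs_shift[OF K this, of N]
  have "\<bar>sin (2*phi)\<bar> \<le> \<bar>sin (2 * (phi + of_int N * (pi / (2*K))))\<bar>"
  proof -
    have "2 * (phi + of_int N * (pi / (2*K))) = 2*phi + of_int N * (pi / K)" using Kp by (simp add: field_simps)
    then show ?thesis using sin_abs_shift[OF K \<open>\<bar>2*phi\<bar> \<le> pi / (2*K)\<close>, of N] by simp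
  qed
  then have "(\<bar>cos phi\<bar> + \<bar>sin phi\<bar>)\<^sup>2 \<le> (\<bar>cos (phi + of_int N * (pi / (2*K)))\<bar> + \<bar>sin (phi + of_int N * (pi / (2*K)))\<bar>)\<^sup>2"
    unfolding g_sq[OF refl] by simp
  then show ?thesis unfolding L by (rule power2_le_imp_le) simp
qed

definition rot :: "nat \<Rightarrow> nat \<Rightarrow> complex \<Rightarrow> complex" where
  "rot m i d = d * cis (- bisector_angle m i)"

definition L1 :: "nat \<Rightarrow> nat \<Rightarrow> complex \<Rightarrow> real" where
  "L1 m i d = \<bar>Re (rot m i d)\<bar> + \<bar>Im (rot m i d)\<bar>"

lemma proj_rot: "proj_len m i u v = Re (rot m i (v - u))"
  unfolding proj_len_def rot_def bisector_dir_def inner_complex_def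
  by (simp add: cos_minus sin_minus)

lemma inner_rot: "d \<bullet> bisector_dir m i = Re (rot m i d)"
  unfolding rot_def bisector_dir_def inner_complex_def
  by (simp add: cos_minus sin_minus)

lemma rot_diff: "rot m i (a - b) = rot m i a - rot m i b"
  unfolding rot_def by (simp add: algebra_simps)

lemma norm_rot: "cmod (rot m i d) = cmod d"
  unfolding rot_def by (simp add: norm_mult)

lemma cone_rep:
  assumes "in_cone m j u v"
  shows "\<exists>a b. a \<ge> 0 \<and> b \<ge> 0 \<and>
     rot m j (v - u) = of_real a * cis (- (cone_angle m / 2)) + of_real b * cis (cone_angle m / 2)"
proof -
  obtain a b where ab: "a \<ge> 0" "b \<ge> 0" "v - u = of_real a * bdry_dir1 m j + of_real b * bdry_dir2 m j"
    using assms unfolding in_cone_def by blast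
  have "rot m j (v - u) = of_real a * cis (- (cone_angle m / 2)) + of_real b * cis (cone_angle m / 2)"
    unfolding ab(3) rot_def bdry_dir1_def bdry_dir2_def
    by (simp add: distrib_right mult.assoc cis_mult)
  then show ?thesis using ab by blast
qed

lemma cone_rep':
  assumes "in_cone m j u v"
  shows "\<exists>a b. a \<ge> 0 \<and> b \<ge> 0 \<and>
     Re (rot m j (v - u)) = (a + b) * cos (cone_angle m / 2) \<and>
     Im (rot m j (v - u)) = (b - a) * sin (cone_angle m / 2)"
proof -
  from cone_rep[OF assms] obtain a b where "a \<ge> 0" "b \<ge> 0"
     "rot m j (v - u) = of_real a * cis (- (cone_angle m / 2)) + of_real b * cis (cone_angle m / 2)"
    by blast
  then show ?thesis by (intro exI[of _ a] exI[of _ b]) (simp add: algebra_simps)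
qed

lemma rot_change: "rot m i d = rot m j d * cis (of_int (int i - int j) * cone_angle m)"
  unfolding rot_def bisector_angle_def
  by (simp add: mult.assoc cis_mult algebra_simps)

lemma z_bound:
  fixes K :: nat and N :: int and p q :: real
  assumes K: "K \<ge> 1" and p: "p > 0" and q: "\<bar>q\<bar> \<le> p * tan (pi / (4*K))"
  shows "p + \<bar>q\<bar> \<le> \<bar>Re (Complex p q * cis (of_int N * (pi / (2*K))))\<bar>
                     + \<bar>Im (Complex p q * cis (of_int N * (pi / (2*K))))\<bar>"
proof -
  have Kp: "real K > 0" using K by simp
  define phi where "phi = arctan (q / p)"
  define r where "r = sqrt (p\<^sup>2 + q\<^sup>2)"
  have r0: "r > 0" unfolding r_def using p by (simp add: add_pos_nonneg)
  have sq: "sqrt (1 + (q/p)\<^sup>2) * p = r"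
  proof -
    have "sqrt (1 + (q/p)\<^sup>2) * p = sqrt (1 + (q/p)\<^sup>2) * sqrt (p\<^sup>2)" using p by simp
    also have "\<dots> = sqrt ((1 + (q/p)\<^sup>2) * p\<^sup>2)" by (simp add: real_sqrt_mult)
    also have "(1 + (q/p)\<^sup>2) * p\<^sup>2 = p\<^sup>2 + q\<^sup>2" using p by (simp add: field_simps power2_eq_square)
    finally show ?thesis unfolding r_def .
  qed
  have pc: "p = r * cos phi"
    unfolding phi_def cos_arctan using sq[symmetric] p
    by (simp add: field_simps)
  have qs: "q = r * sin phi"
    unfolding phi_def sin_arctan using sq[symmetric] p
    by (simp add: field_simps)
  have h0: "0 < pi / (4*K)" "pi / (4*K) < pi / 2" using Kp K by (auto simp: divide_less_eq)
  have "\<bar>q / p\<bar> \<le> tan (pi / (4*K))" using q p by (simp add: abs_div pos_divide_le_eq mult.commute)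
  then have "arctan \<bar>q/p\<bar> \<le> arctan (tan (pi / (4*K)))" by (simp add: arctan_le_iff)
  also have "\<dots> = pi / (4*K)" using h0 by (intro arctan_tan) auto
  moreover have "\<bar>arctan x\<bar> = arctan \<bar>x\<bar>" for x :: real
  proof (cases "x \<ge> 0")
    case True then show ?thesis by (simp add: zero_le_arctan_iff)
  next
    case False
    then have "arctan x < 0" by (simp add: arctan_less_zero_iff)
    then show ?thesis using False by (simp add: arctan_minus)
  qed
  ultimately have ph: "\<bar>phi\<bar> \<le> pi / (4*K)" unfolding phi_def by metis
  have z: "Complex p q = of_real r * cis phi" by (simp add: complex_eq_iff pc qs)
  have "Complex p q * cis (of_int N * (pi / (2*K))) = of_real r * cis (phi + of_int N * (pi / (2*K)))"
    unfolding z by (simp add: mult.assoc cis_mult)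
  then have E: "\<bar>Re (Complex p q * cis (of_int N * (pi / (2*K))))\<bar>
                     + \<bar>Im (Complex p q * cis (of_int N * (pi / (2*K))))\<bar>
     = r * (\<bar>cos (phi + of_int N * (pi / (2*K)))\<bar> + \<bar>sin (phi + of_int N * (pi / (2*K)))\<bar>)"
    using r0 by (simp add: abs_mult distrib_left)
  have L: "p + \<bar>q\<bar> = r * (cos phi + \<bar>sin phi\<bar>)" using r0 by (simp add: pc qs abs_mult distrib_left)
  show ?thesis unfolding E L using main_trig[OF K ph, of N] r0 by (intro mult_left_mono) auto
qed

lemma angle_facts:
  assumes "m = 4 * K" "K \<ge> 1"
  shows "cone_angle m = pi / (2*K)" "cone_angle m / 2 = pi / (4*K)"
        "cos (cone_angle m / 2) > 0" "sin (cone_angle m / 2) > 0"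
        "0 < cone_angle m / 2" "cone_angle m / 2 < pi/2"
proof -
  have Kp: "real K > 0" using assms by simp
  show ca: "cone_angle m = pi / (2*K)" unfolding cone_angle_def assms(1) using Kp by (simp add: field_simps)
  show ch: "cone_angle m / 2 = pi / (4*K)" unfolding ca using Kp by (simp add: field_simps)
  show h0: "0 < cone_angle m / 2" unfolding ch using Kp by simp
  show h1: "cone_angle m / 2 < pi/2" unfolding ch using Kp assms by (simp add: divide_less_eq)
  show "cos (cone_angle m / 2) > 0" using h0 h1 by (intro cos_gt_zero) auto
  show "sin (cone_angle m / 2) > 0" using h0 h1 by (intro sin_gt_zero) auto
qed

lemma L1_nonneg: "L1 m i d \<ge> 0" unfolding L1_def by simp

lemma L1_cone:
  assumes mK: "m = 4 * K" and K: "K \<ge> 1" and cone: "in_cone m j a w"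
  shows "L1 m j (w - a) \<le> L1 m i (w - a)"
proof -
  note af = angle_facts[OF mK K]
  obtain \<alpha> \<beta> where ab: "\<alpha> \<ge> 0" "\<beta> \<ge> 0"
    "Re (rot m j (w - a)) = (\<alpha> + \<beta>) * cos (cone_angle m / 2)"
    "Im (rot m j (w - a)) = (\<beta> - \<alpha>) * sin (cone_angle m / 2)"
    using cone_rep'[OF cone] by blast
  show ?thesis
  proof (cases "\<alpha> + \<beta> = 0")
    case True
    then have "\<alpha> = 0" "\<beta> = 0" using ab by auto
    then show ?thesis using ab L1_nonneg[of m i "w-a"] unfolding L1_def by simp
  next
    case False
    then have ab0: "\<alpha> + \<beta> > 0" using ab by auto
    define p where "p = Re (rot m j (w - a))"
    define q where "q = Im (rot m j (w - a))"
    have p0: "p > 0" unfolding p_def ab(3) using ab0 af by simp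
    have "\<bar>q\<bar> = \<bar>\<beta> - \<alpha>\<bar> * sin (cone_angle m / 2)" unfolding q_def ab(4) using af by (simp add: abs_mult)
    also have "\<dots> \<le> (\<alpha> + \<beta>) * sin (cone_angle m / 2)" using ab af by (intro mult_right_mono) auto
    also have "\<dots> = p * tan (pi / (4*K))" unfolding p_def ab(3) af(2)[symmetric] tan_def using af by simp
    finally have qb: "\<bar>q\<bar> \<le> p * tan (pi / (4*K))" .
    have rj: "rot m j (w - a) = Complex p q" unfolding p_def q_def by simp
    have ri: "rot m i (w - a) = Complex p q * cis (of_int (int i - int j) * (pi / (2*K)))"
      using rot_change[of m i "w - a" j] unfolding rj af(1) .
    show ?thesis unfolding L1_def ri using z_bound[OF K p0 qb, of "int i - int j"] unfolding rj using p0 by simp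
  qed
qed

lemma cis_decomp:
  fixes h phi :: real
  assumes h: "0 < h" "h < pi/2" and ph: "\<bar>phi\<bar> \<le> h"
  shows "\<exists>a b. a \<ge> 0 \<and> b \<ge> 0 \<and> cis phi = of_real a * cis (- h) + of_real b * cis h"
proof -
  have c: "cos h > 0" using h by (intro cos_gt_zero) auto
  have s: "sin h > 0" using h by (intro sin_gt_zero) auto
  define a where "a = (cos phi / cos h - sin phi / sin h) / 2"
  define b where "b = (cos phi / cos h + sin phi / sin h) / 2"
  have "sin (h - phi) \<ge> 0" using h ph by (intro sin_ge_zero) auto
  then have "sin h * cos phi - cos h * sin phi \<ge> 0" by (simp add: sin_diff)
  then have a0: "a \<ge> 0" unfolding a_def using c s by (simp add: field_simps)
  have "sin (h + phi) \<ge> 0" using h ph by (intro sin_ge_zero) auto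
  then have "sin h * cos phi + cos h * sin phi \<ge> 0" by (simp add: sin_add)
  then have b0: "b \<ge> 0" unfolding b_def using c s by (simp add: field_simps)
  have "cis phi = of_real a * cis (- h) + of_real b * cis h"
    unfolding a_def b_def using c s by (simp add: complex_eq_iff field_simps)
  then show ?thesis using a0 b0 by blast
qed

lemma cone_cover:
  assumes mK: "m = 4 * K" and K: "K \<ge> 1" and d: "d \<noteq> 0"
  shows "\<exists>j<m. in_cone m j u (u + d)"
proof -
  note af = angle_facts[OF mK K]
  define \<theta> where "\<theta> = cone_angle m"
  have th0: "\<theta> > 0" unfolding \<theta>_def using af by simp
  have mth: "real m * \<theta> = 2 * pi" unfolding \<theta>_def cone_angle_def mK using K by simp
  define \<beta> where "\<beta> = Arg d"
  define r where "r = cmod d"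
  have dr: "d = of_real r * cis \<beta>" unfolding r_def \<beta>_def using rcis_cmod_Arg[of d] by (simp add: rcis_def)
  define s0 where "s0 = (pi/2 - \<beta>) / \<theta>"
  define n where "n = \<lfloor>s0 + 1/2\<rfloor>"
  have n1: "real_of_int n \<le> s0 + 1/2" "s0 + 1/2 < real_of_int n + 1" unfolding n_def by linarith+
  define f where "f = s0 - real_of_int n"
  have fb: "\<bar>f\<bar> \<le> 1/2" unfolding f_def using n1 by linarith
  have mpos: "int m > 0" using mK K by simp
  define q where "q = n div int m"
  define jj where "jj = n mod int m"
  have jj0: "0 \<le> jj" "jj < int m" unfolding jj_def using mpos by auto
  define j where "j = nat jj"
  have jm: "j < m" unfolding j_def using jj0 by auto
  have jreal: "real j = real_of_int n - real_of_int q * real m"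
  proof -
    have "n = q * int m + jj" unfolding q_def jj_def by simp
    then have "real_of_int jj = real_of_int n - real_of_int q * real m" by simp
    then show ?thesis unfolding j_def using jj0 by simp
  qed
  define phi where "phi = - f * \<theta>"
  have ph: "\<bar>phi\<bar> \<le> cone_angle m / 2"
  proof -
    have "\<bar>phi\<bar> = \<bar>f\<bar> * \<theta>" unfolding phi_def using th0 by (simp add: abs_mult)
    also have "\<dots> \<le> (1/2) * \<theta>" using fb th0 by (intro mult_right_mono) auto
    finally show ?thesis unfolding \<theta>_def by simp
  qed
  have beq: "\<beta> = bisector_angle m j + phi + 2 * pi * (- real_of_int q)"
  proof -
    have "\<beta> = pi/2 - s0 * \<theta>" unfolding s0_def using th0 by simp
    also have "s0 = real_of_int n + f" unfolding f_def by simp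
    finally have "\<beta> = pi/2 - real_of_int n * \<theta> - f * \<theta>" by (simp add: algebra_simps)
    moreover have "bisector_angle m j = pi/2 - real_of_int n * \<theta> + real_of_int q * (real m * \<theta>)"
      unfolding bisector_angle_def \<theta>_def[symmetric] jreal by (simp add: algebra_simps)
    ultimately show ?thesis unfolding mth phi_def by (simp add: algebra_simps)
  qed
  have "cis \<beta> = cis (bisector_angle m j) * cis phi"
  proof -
    have "cis \<beta> = cis (bisector_angle m j + phi) * cis (2 * pi * (- real_of_int q))"
      unfolding beq cis_mult by simp
    also have "cis (2 * pi * (- real_of_int q)) = 1" by (rule cis_multiple_2pi) simp
    finally show ?thesis by (simp add: cis_mult)
  qed
  obtain a b where ab: "a \<ge> 0" "b \<ge> 0" "cis phi = of_real a * cis (- (cone_angle m/2)) + of_real b * cis (cone_angle m/2)"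
    using cis_decomp[OF af(5) af(6) ph] by blast
  have "u + d - u = of_real (r*a) * bdry_dir1 m j + of_real (r*b) * bdry_dir2 m j"
    unfolding bdry_dir1_def bdry_dir2_def dr \<open>cis \<beta> = _\<close> ab(3)
    by (simp add: algebra_simps cis_mult)
  moreover have "r * a \<ge> 0" "r * b \<ge> 0" unfolding r_def using ab by auto
  ultimately have "in_cone m j u (u + d)" unfolding in_cone_def using d by (intro conjI) (simp, blast)
  then show ?thesis using jm by blast
qed

lemma cs_gap:
  assumes mK: "m = 4 * K" and K: "K \<ge> 2"
  shows "sin (cone_angle m / 2) < cos (cone_angle m / 2)"
        "cos (cone_angle m / 2) - sin (cone_angle m / 2) \<le> 1"
proof -
  have K1: "K \<ge> 1" using K by simp
  note af = angle_facts[OF mK K1]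
  have h4: "cone_angle m / 2 < pi / 4" unfolding af(2) using K by (simp add: divide_less_eq)
  have "cos (pi/2 - cone_angle m / 2) < cos (cone_angle m / 2)"
    using af h4 by (subst cos_mono_less_eq) auto
  then show "sin (cone_angle m / 2) < cos (cone_angle m / 2)" by (simp add: sin_cos_eq)
  show "cos (cone_angle m / 2) - sin (cone_angle m / 2) \<le> 1" using af cos_le_one[of "cone_angle m / 2"] by linarith
qed

lemma path_cons:
  assumes e: "theta_edge m P u a" and p: "is_theta_path m P ps a w"
  shows "is_theta_path m P (u # ps) u w \<and> path_length (u # ps) = dist u a + path_length ps"
proof -
  obtain rest where ps: "ps = a # rest" using p unfolding is_theta_path_def by (cases ps) auto
  have "is_theta_path m P (u # ps) u w"
    unfolding is_theta_path_def
  proof (intro conjI allI impI)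
    show "last (u # ps) = w" using p unfolding is_theta_path_def ps by simp
    fix j assume j: "Suc j < length (u # ps)"
    show "theta_edge m P ((u # ps) ! j) ((u # ps) ! Suc j)"
    proof (cases j)
      case 0 then show ?thesis using e ps by simp
    next
      case (Suc j') then show ?thesis using p j unfolding is_theta_path_def by simp
    qed
  qed simp_all
  moreover have "path_length (u # ps) = dist u a + path_length ps"
    unfolding path_length_def ps by simp
  ultimately show ?thesis by blast
qed

lemma step_ineq:
  assumes mK: "m = 4 * K" and K: "K \<ge> 2"
    and ca: "in_cone m i u a" and cw: "in_cone m i u w" and cj: "in_cone m j a w"
    and lt: "Re (rot m i (a - u)) < Re (rot m i (w - u))"
  shows "(cos (cone_angle m / 2) - sin (cone_angle m / 2)) * dist u a + L1 m j (w - a) \<le> L1 m i (w - u)"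
    and "dist u a > 0"
proof -
  have K1: "K \<ge> 1" using K by simp
  note af = angle_facts[OF mK K1]
  define c where "c = cos (cone_angle m / 2)"
  define s where "s = sin (cone_angle m / 2)"
  obtain \<alpha> \<beta> where ab: "\<alpha> \<ge> 0" "\<beta> \<ge> 0"
    "rot m i (a - u) = of_real \<alpha> * cis (- (cone_angle m / 2)) + of_real \<beta> * cis (cone_angle m / 2)"
    using cone_rep[OF ca] by blast
  have ReA: "Re (rot m i (a - u)) = (\<alpha> + \<beta>) * c" unfolding ab(3) c_def by (simp add: algebra_simps)
  have ImA: "Im (rot m i (a - u)) = (\<beta> - \<alpha>) * s" unfolding ab(3) s_def by (simp add: algebra_simps)
  have "cmod (rot m i (a - u)) \<le> cmod (of_real \<alpha> * cis (- (cone_angle m / 2))) + cmod (of_real \<beta> * cis (cone_angle m / 2))"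
    unfolding ab(3) by (rule norm_triangle_ineq)
  then have "cmod (rot m i (a - u)) \<le> \<alpha> + \<beta>" using ab by (simp add: norm_mult)
  then have du: "dist u a \<le> \<alpha> + \<beta>" by (simp add: norm_rot dist_commute dist_norm)
  have "a \<noteq> u" using ca unfolding in_cone_def by simp
  then show dpos: "dist u a > 0" by simp
  define Y where "Y = Re (rot m i (w - u))"
  define X where "X = Im (rot m i (w - u))"
  have rwa: "rot m i (w - a) = rot m i (w - u) - rot m i (a - u)"
    by (simp add: rot_diff[symmetric])
  have "L1 m j (w - a) \<le> L1 m i (w - a)" using L1_cone[OF mK K1 cj] .
  also have "L1 m i (w - a) = \<bar>Y - (\<alpha> + \<beta>) * c\<bar> + \<bar>X - (\<beta> - \<alpha>) * s\<bar>"
    unfolding L1_def rwa Y_def X_def using ReA ImA by simp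
  also have "\<dots> \<le> (Y - (\<alpha> + \<beta>) * c) + \<bar>X\<bar> + \<bar>\<beta> - \<alpha>\<bar> * s"
  proof -
    have "\<bar>Y - (\<alpha> + \<beta>) * c\<bar> = Y - (\<alpha> + \<beta>) * c" using lt ReA unfolding Y_def by simp
    moreover have "\<bar>X - (\<beta> - \<alpha>) * s\<bar> \<le> \<bar>X\<bar> + \<bar>(\<beta> - \<alpha>) * s\<bar>" by (rule abs_triangle_ineq4)
    moreover have "\<bar>(\<beta> - \<alpha>) * s\<bar> = \<bar>\<beta> - \<alpha>\<bar> * s" using af unfolding s_def by (simp add: abs_mult)
    ultimately show ?thesis by linarith
  qed
  finally have L: "L1 m j (w - a) \<le> (Y - (\<alpha> + \<beta>) * c) + \<bar>X\<bar> + \<bar>\<beta> - \<alpha>\<bar> * s" .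
  have cs: "s < c" "c - s \<le> 1" using cs_gap[OF mK K] unfolding c_def s_def by auto
  have f1: "(c - s) * dist u a \<le> (c - s) * (\<alpha> + \<beta>)" using du cs by (intro mult_left_mono) auto
  have f2: "\<bar>\<beta> - \<alpha>\<bar> * s \<le> (\<alpha> + \<beta>) * s" using ab af unfolding s_def by (intro mult_right_mono) auto
  have f3: "Y \<le> L1 m i (w - u) - \<bar>X\<bar>" unfolding L1_def Y_def X_def by simp
  have f4: "(c - s) * (\<alpha> + \<beta>) = (\<alpha> + \<beta>) * c - (\<alpha> + \<beta>) * s" by (simp add: algebra_simps)
  have "(c - s) * dist u a + L1 m j (w - a) \<le> L1 m i (w - u)"
    using L f1 f2 f3 f4 by linarith
  then show "(cos (cone_angle m / 2) - sin (cone_angle m / 2)) * dist u a + L1 m j (w - a) \<le> L1 m i (w - u)"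
    unfolding c_def s_def .
qed

lemma claim:
  assumes mK: "m = 4 * K" and K: "K \<ge> 2" and fin: "finite P" and gp: "general_position m P"
  shows "u \<in> P \<Longrightarrow> w \<in> P \<Longrightarrow> i < m \<Longrightarrow> in_cone m i u w \<Longrightarrow>
    \<exists>ps. is_theta_path m P ps u w \<and>
      path_length ps \<le> L1 m i (w - u) / (cos (cone_angle m / 2) - sin (cone_angle m / 2))"
proof -
  define C where "C = cos (cone_angle m / 2) - sin (cone_angle m / 2)"
  have C0: "C > 0" "C \<le> 1" using cs_gap[OF mK K] unfolding C_def by auto
  define V where "V = (\<lambda>(u,w,i). L1 m i (w - u)) ` (P \<times> P \<times> {..<m})"
  have finV: "finite V" unfolding V_def using fin by simp
  define rk where "rk x = card {v\<in>V. v < x}" for x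
  have main: "\<forall>u w i. rk (L1 m i (w - u)) = n \<longrightarrow> u \<in> P \<longrightarrow> w \<in> P \<longrightarrow> i < m \<longrightarrow> in_cone m i u w \<longrightarrow>
      (\<exists>ps. is_theta_path m P ps u w \<and> path_length ps \<le> L1 m i (w - u) / C)" for n
  proof (induction n rule: less_induct)
    case (less n)
    show ?case
    proof (intro allI impI)
      fix u w i
      assume r: "rk (L1 m i (w - u)) = n" and uP: "u \<in> P" and wP: "w \<in> P" and im: "i < m"
        and cw: "in_cone m i u w"
      define S where "S = {v\<in>P. in_cone m i u v}"
      have finS: "finite S" unfolding S_def using fin by simp
      have wS: "w \<in> S" unfolding S_def using wP cw by simp
      define mn where "mn = Min (proj_len m i u ` S)"
      have "mn \<in> proj_len m i u ` S" unfolding mn_def using finS wS by (intro Min_in) auto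
      then obtain a where aS: "a \<in> S" and amn: "proj_len m i u a = mn" by blast
      have amin: "\<forall>v\<in>S. proj_len m i u a \<le> proj_len m i u v"
        unfolding amn mn_def using finS by simp
      have aP: "a \<in> P" and ca: "in_cone m i u a" using aS unfolding S_def by auto
      have edge: "theta_edge m P u a"
        unfolding theta_edge_def theta_dedge_def using uP aP im ca amin unfolding S_def by blast
      show "\<exists>ps. is_theta_path m P ps u w \<and> path_length ps \<le> L1 m i (w - u) / C"
      proof (cases "a = w")
        case True
        have path: "is_theta_path m P [u, w] u w"
          unfolding is_theta_path_def using edge True by (auto simp: less_Suc_eq)
        have "path_length [u, w] = dist u w" unfolding path_length_def by simp
        also have "\<dots> = cmod (rot m i (w - u))" by (simp add: norm_rot dist_norm norm_minus_commute)
        also have "\<dots> \<le> L1 m i (w - u)" unfolding L1_def by (rule cmod_le)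
        also have "\<dots> \<le> L1 m i (w - u) / C"
          using C0 L1_nonneg[of m i "w - u"] by (simp add: le_divide_eq mult_left_le)
        finally show ?thesis using path by blast
      next
        case False
        have le: "proj_len m i u a \<le> proj_len m i u w" using amin wS by simp
        have "(w - a) \<bullet> bisector_dir m i \<noteq> 0" using gp aP wP False im unfolding general_position_def by blast
        then have "Re (rot m i (w - u)) - Re (rot m i (a - u)) \<noteq> 0"
          unfolding inner_rot by (metis rot_diff diff_diff_eq2 diff_add_cancel minus_complex.sel(1))
        then have lt: "Re (rot m i (a - u)) < Re (rot m i (w - u))" using le unfolding proj_rot by simp
        have K1: "K \<ge> 1" using K by simp
        obtain j where jm: "j < m" and cj0: "in_cone m j a (a + (w - a))"
          using cone_cover[OF mK K1, of "w - a" a] False by auto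
        have cj: "in_cone m j a w" using cj0 by simp
        have si: "C * dist u a + L1 m j (w - a) \<le> L1 m i (w - u)" "dist u a > 0"
          using step_ineq[OF mK K ca cw cj lt] unfolding C_def by auto
        have Llt: "L1 m j (w - a) < L1 m i (w - u)" using si C0 by (smt (verit) mult_pos_pos)
        have "{v\<in>V. v < L1 m j (w - a)} \<subset> {v\<in>V. v < L1 m i (w - u)}"
        proof
          show "{v\<in>V. v < L1 m j (w - a)} \<subseteq> {v\<in>V. v < L1 m i (w - u)}" using Llt by auto
          have "L1 m j (w - a) \<in> V" unfolding V_def using aP wP jm by force
          then show "{v\<in>V. v < L1 m j (w - a)} \<noteq> {v\<in>V. v < L1 m i (w - u)}" using Llt by blast
        qed
        then have "rk (L1 m j (w - a)) < n" unfolding r[symmetric] rk_def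
          using finV by (intro psubset_card_mono) auto
        from less.IH[OF this, rule_format, OF refl aP wP jm cj]
        obtain ps where ps: "is_theta_path m P ps a w" "path_length ps \<le> L1 m j (w - a) / C" by blast
        from path_cons[OF edge ps(1)]
        have np: "is_theta_path m P (u # ps) u w" "path_length (u # ps) = dist u a + path_length ps" by auto
        have "dist u a + L1 m j (w - a) / C \<le> L1 m i (w - u) / C"
        proof -
          have "dist u a + L1 m j (w - a) / C = (C * dist u a + L1 m j (w - a)) / C"
            using C0 by (simp add: field_simps)
          also have "\<dots> \<le> L1 m i (w - u) / C" using si(1) C0 by (intro divide_right_mono) auto
          finally show ?thesis .
        qed
        then show ?thesis using np ps(2) by (intro exI[of _ "u # ps"]) auto
      qed
    qed
  qed
  assume "u \<in> P" "w \<in> P" "i < m" "in_cone m i u w"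
  then show ?thesis using main[of "rk (L1 m i (w - u))"] unfolding C_def by blast
qed


lemma alg:
  fixes D c s Y aX :: real
  assumes "D > 0" "c > 0" "c - s > 0"
  shows "(Y / D / c + (Y / D * (s / c) + aX / D) / (c - s)) * D = (Y + aX) / (c - s)"
proof -
  have "c - s \<noteq> 0" "c \<noteq> 0" "D \<noteq> 0" using assms by auto
  then show ?thesis by (simp add: field_simps)
qed

theorem mainTheorem8:
  fixes k m :: nat and P :: "complex set" and u w :: complex
  assumes "k \<ge> 1" and "m = 4 * k + 4"
    and "finite P" and "general_position m P"
    and "u \<in> P" and "w \<in> P" and "u \<noteq> w"
    and "i < m" and "in_cone m i u w"
  shows "let \<theta> = cone_angle m;
             M = (canon_far1 m i u w + canon_far2 m i u w) / 2;
             \<alpha> = uangle (w - u) (M - u)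
         in \<exists>ps. is_theta_path m P ps u w \<and>
              path_length ps \<le> (cos \<alpha> / cos (\<theta> / 2)
                 + (cos \<alpha> * tan (\<theta> / 2) + sin \<alpha>) / (cos (\<theta> / 2) - sin (\<theta> / 2))) * dist u w"
proof -
  define K where "K = k + 1"
  have mK: "m = 4 * K" and K: "K \<ge> 2" unfolding K_def using assms by auto
  have K1: "K \<ge> 1" using K by simp
  note af = angle_facts[OF mK K1]
  define h where "h = cone_angle m / 2"
  define c where "c = cos h"
  define s where "s = sin h"
  define C where "C = c - s"
  have c0: "c > 0" and s0: "s > 0" unfolding c_def s_def h_def using af by auto
  have C0: "C > 0" unfolding C_def c_def s_def h_def using cs_gap[OF mK K] by simp
  obtain ps where ps: "is_theta_path m P ps u w" "path_length ps \<le> L1 m i (w - u) / C"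
    using claim[OF mK K assms(3,4,5,6,8,9)] unfolding C_def c_def s_def h_def by blast
  define Y where "Y = Re (rot m i (w - u))"
  define X where "X = Im (rot m i (w - u))"
  define D where "D = dist u w"
  have D0: "D > 0" unfolding D_def using assms by simp
  have Dsq: "D = sqrt (Y\<^sup>2 + X\<^sup>2)"
  proof -
    have "D = cmod (rot m i (w - u))" by (simp add: norm_rot D_def dist_norm norm_minus_commute)
    then show ?thesis unfolding cmod_def Y_def X_def .
  qed
  have "\<forall>p\<in>P. \<forall>q\<in>P. p \<noteq> q \<longrightarrow> (\<forall>i<m. (q - p) \<bullet> bisector_dir m i \<noteq> 0)"
    using assms(4) unfolding general_position_def by blast
  then have "(w - u) \<bullet> bisector_dir m i \<noteq> 0" using assms(5,6,7,8) by blast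
  moreover have "Y \<ge> 0"
  proof -
    obtain a b where "a \<ge> 0" "b \<ge> 0" "Re (rot m i (w - u)) = (a + b) * cos (cone_angle m / 2)"
      using cone_rep'[OF assms(9)] by blast
    then show ?thesis unfolding Y_def using af by simp
  qed
  ultimately have Y0: "Y > 0" unfolding inner_rot Y_def by simp
  have YD: "Y \<le> D" unfolding D_def dist_commute[of u w] dist_norm Y_def
    using abs_Re_le_cmod[of "rot m i (w - u)"] norm_rot[of m i "w - u"] by (simp add: norm_minus_commute)
  have Mu: "(canon_far1 m i u w + canon_far2 m i u w) / 2 - u = of_real Y * bisector_dir m i"
  proof -
    have pl: "proj_len m i u w = Y" unfolding proj_rot Y_def ..
    have e: "cis (- h) + cis h = of_real (2 * c)" unfolding c_def by (simp add: complex_eq_iff)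
    have s1: "canon_far1 m i u w + canon_far2 m i u w = 2 * u + of_real (Y / c) * (cis (bisector_angle m i - h) + cis (bisector_angle m i + h))"
      unfolding canon_far1_def canon_far2_def bdry_dir1_def bdry_dir2_def pl h_def[symmetric] c_def[symmetric]
      by (simp add: algebra_simps)
    have s2: "cis (bisector_angle m i - h) + cis (bisector_angle m i + h) = cis (bisector_angle m i) * (cis (- h) + cis h)"
      by (simp add: distrib_left cis_mult)
    have "canon_far1 m i u w + canon_far2 m i u w = 2 * u + 2 * (of_real Y * bisector_dir m i)"
      unfolding s1 s2 e bisector_dir_def using c0 by (simp add: field_simps)
    then show ?thesis by (simp add: field_simps)
  qed
  define \<alpha> where "\<alpha> = uangle (w - u) (of_real Y * bisector_dir m i)"
  have inn: "(w - u) \<bullet> (of_real Y * bisector_dir m i) = Y * Y"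
    unfolding scaleR_conv_of_real[symmetric] inner_scaleR_right inner_rot Y_def ..
  have nrm: "norm (of_real Y * bisector_dir m i) = Y" using Y0 unfolding bisector_dir_def by (simp add: norm_mult)
  have ndu: "norm (w - u) = D" unfolding D_def by (simp add: dist_norm norm_minus_commute)
  have al: "\<alpha> = arccos (Y / D)" unfolding \<alpha>_def uangle_def inn nrm ndu using Y0 D0 by simp
  have YD1: "-1 \<le> Y / D" "Y / D \<le> 1" using Y0 D0 YD
    by (auto simp: divide_le_eq_1 intro: order.trans[of _ 0] divide_nonneg_pos)
  have ca: "cos \<alpha> = Y / D" unfolding al using YD1 by (simp add: cos_arccos)
  have sa: "sin \<alpha> = \<bar>X\<bar> / D"
  proof -
    have "sin \<alpha> = sqrt (1 - (Y / D)\<^sup>2)" unfolding al using YD1 by (simp add: sin_arccos)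
    also have "1 - (Y / D)\<^sup>2 = (X / D)\<^sup>2"
    proof -
      have "D\<^sup>2 = Y\<^sup>2 + X\<^sup>2" unfolding Dsq by (simp add: add_nonneg_nonneg)
      have "1 - (Y / D)\<^sup>2 = (D\<^sup>2 - Y\<^sup>2) / D\<^sup>2" using D0 by (simp add: field_simps power_divide)
      also have "\<dots> = (X / D)\<^sup>2" using \<open>D\<^sup>2 = Y\<^sup>2 + X\<^sup>2\<close> by (simp add: power_divide)
      finally show ?thesis .
    qed
    finally show ?thesis using D0 by simp
  qed
  have "(cos \<alpha> / c + (cos \<alpha> * tan h + sin \<alpha>) / C) * D = L1 m i (w - u) / C"
  proof -
    have L: "L1 m i (w - u) = Y + \<bar>X\<bar>" unfolding L1_def Y_def[symmetric] X_def[symmetric] using Y0 by simp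
    have t: "tan h = s / c" unfolding tan_def c_def s_def ..
    show ?thesis unfolding ca sa L t C_def using alg[OF D0 c0 C0[unfolded C_def]] .
  qed
  then show ?thesis unfolding Let_def Mu \<alpha>_def[symmetric] h_def[symmetric] c_def[symmetric] s_def[symmetric]
    C_def[symmetric] D_def[symmetric] using ps by (intro exI[of _ ps]) auto
qed

end
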